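(* For any pair of search/learning algorithms $\mathcal{A}_1$, $\mathcal{A}_2$ operating on discrete finite search space $\Omega$, any closed under permutation set of target sets $\tau$, any set of information resources $\mathcal{B}$, and decomposable probability-of-success metric $\phi$, \[ \sum_{t\in\tau}\sum_{f\in\mathcal{B}} \phi_{\mathcal{A}_1}(t,f) = \sum_{t\in\tau}\sum_{f\in\mathcal{B}} \phi_{\mathcal{A}_2}(t,f). \]
   Context: Algorithmic search framework: a finite discrete search space $\Omega$, a nonempty target set $t\subseteq\Omega$ (with target function/indicator vector $\mathbf{t}\in\{0,1\}^{|\Omega|}$), and an external information resource $f$. A black-box iterative algorithm $\mathcal{A}$ produces, at each step, a probability distribution over $\Omega$ from which it samples, using $f$ and the search history. A probability-of-success metric $\phi$ is decomposable if there exists a probability vector $\mathbf{P}_{\phi,f}$ over $\Omega$ (not a function of $t$, conditionally independent of it given $f$) with $\phi(t,f)=\mathbf{t}^{\top}\mathbf{P}_{\phi,f}=P_\phi(X\in t\mid f)$. $\phi_{\mathcal{A}}(t,f)$ denotes the metric for algorithm $\mathcal{A}$. A set of target sets is closed under permutation if it is closed under permutations of the elements of $\Omega$. *)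

theory Defs
  imports Complex_Main
begin

definition prob_vector :: "('a::finite \<Rightarrow> real) \<Rightarrow> bool" where
  "prob_vector p \<longleftrightarrow> (\<forall>x. 0 \<le> p x) \<and> (\<Sum>x\<in>UNIV. p x) = 1"

text \<open>A probability-of-success metric phi (of an algorithm) is decomposable if there is,
  for each information resource f, a probability vector P f over Omega, depending only on f
  (not on the target t), such that phi t f = t^T P f = sum of P f over t.\<close>
definition decomposable :: "('a::finite set \<Rightarrow> 'f \<Rightarrow> real) \<Rightarrow> bool" where
  "decomposable phi \<longleftrightarrow>
     (\<exists>P :: 'f \<Rightarrow> 'a \<Rightarrow> real. (\<forall>f. prob_vector (P f)) \<and> (\<forall>t f. phi t f = (\<Sum>x\<in>t. P f x)))"

definition closed_under_permutation :: "'a set set \<Rightarrow> bool" where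
  "closed_under_permutation T \<longleftrightarrow> (\<forall>\<sigma>. bij \<sigma> \<longrightarrow> (\<forall>t\<in>T. \<sigma> ` t \<in> T))"

end

theory Submission
  imports Defs
begin

lemma card_const:
  fixes \<tau> :: "'a set set"
  assumes cl: "closed_under_permutation \<tau>" and fin: "finite \<tau>"
  shows "card {t\<in>\<tau>. x\<in>t} \<le> card {t\<in>\<tau>. y\<in>t}"
proof -
  define \<sigma> where "\<sigma> = (\<lambda>z::'a. if z = x then y else if z = y then x else z)"
  have ss: "\<sigma> (\<sigma> z) = z" for z by (simp add: \<sigma>_def)
  have bij: "bij \<sigma>" by (metis ss bij_betw_byWitness subset_UNIV image_subset_iff UNIV_I)
  have inj: "inj (\<sigma>)" using bij bij_is_inj by blast
  have "inj_on ((`) \<sigma>) {t\<in>\<tau>. x\<in>t}" using inj by (meson inj_image_eq_iff inj_onI)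
  moreover have "(`) \<sigma> ` {t\<in>\<tau>. x\<in>t} \<subseteq> {t\<in>\<tau>. y\<in>t}"
  proof
    fix u assume "u \<in> (`) \<sigma> ` {t\<in>\<tau>. x\<in>t}"
    then obtain t where t: "t \<in> \<tau>" "x \<in> t" "u = \<sigma> ` t" by blast
    have "u \<in> \<tau>" using cl bij t(1) unfolding closed_under_permutation_def t(3) by simp
    moreover have "y \<in> u" unfolding t(3) using t(2) by (simp add: \<sigma>_def image_iff)
    ultimately show "u \<in> {t\<in>\<tau>. y\<in>t}" by blast
  qed
  ultimately show ?thesis using fin by (intro card_inj_on_le) auto
qed

lemma sum_const:
  fixes phi :: "'a::finite set \<Rightarrow> 'f \<Rightarrow> real" and \<tau> :: "'a set set"
  assumes d: "decomposable phi" and cl: "closed_under_permutation \<tau>"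
  shows "(\<Sum>t\<in>\<tau>. phi t f) = real (card {t\<in>\<tau>. (undefined::'a)\<in>t})"
proof -
  obtain P where P: "\<forall>f. prob_vector (P f)" "\<forall>t f. phi t f = (\<Sum>x\<in>t. P f x)"
    using d unfolding decomposable_def by blast
  have fin: "finite \<tau>" by (rule finite_subset[of _ UNIV]) auto
  define cc where "cc = card {t\<in>\<tau>. (undefined::'a)\<in>t}"
  have c: "card {t\<in>\<tau>. x\<in>t} = cc" for x
    using card_const[OF cl fin, of x undefined] card_const[OF cl fin, of undefined x] unfolding cc_def by linarith
  have "(\<Sum>t\<in>\<tau>. phi t f) = (\<Sum>t\<in>\<tau>. \<Sum>x\<in>UNIV. if x \<in> t then P f x else 0)"
    using P(2) by (simp add: sum.If_cases)
  also have "\<dots> = (\<Sum>x\<in>UNIV. \<Sum>t\<in>\<tau>. if x \<in> t then P f x else 0)"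
    by (rule sum.swap)
  also have "\<dots> = (\<Sum>x\<in>UNIV. P f x * real (card {t\<in>\<tau>. x\<in>t}))"
    proof (rule sum.cong[OF refl])
    fix x
    have "(\<Sum>t\<in>\<tau>. if x \<in> t then P f x else 0) = (\<Sum>t\<in>{t\<in>\<tau>. x\<in>t}. P f x)"
      using fin by (rule sum.inter_filter[symmetric])
    also have "\<dots> = P f x * real (card {t\<in>\<tau>. x\<in>t})" by simp
    finally show "(\<Sum>t\<in>\<tau>. if x \<in> t then P f x else 0) = P f x * real (card {t\<in>\<tau>. x\<in>t})" .
  qed
  also have "\<dots> = (\<Sum>x\<in>UNIV. P f x) * real cc"
    by (simp add: c sum_distrib_right)
  also have "\<dots> = real cc" using P(1) unfolding prob_vector_def by simp
  finally show ?thesis unfolding cc_def .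
qed

theorem theorem1:
  fixes phi1 phi2 :: "'a::finite set \<Rightarrow> 'f \<Rightarrow> real"
    and \<tau> :: "'a set set" and B :: "'f set"
  assumes "decomposable phi1" and "decomposable phi2"
    and "closed_under_permutation \<tau>"
    and "\<forall>t\<in>\<tau>. t \<noteq> {}"
    and "finite B"
  shows "(\<Sum>t\<in>\<tau>. \<Sum>f\<in>B. phi1 t f) = (\<Sum>t\<in>\<tau>. \<Sum>f\<in>B. phi2 t f)"
proof -
  have "(\<Sum>t\<in>\<tau>. \<Sum>f\<in>B. phi1 t f) = (\<Sum>f\<in>B. \<Sum>t\<in>\<tau>. phi1 t f)" by (rule sum.swap)
  also have "\<dots> = (\<Sum>f\<in>B. \<Sum>t\<in>\<tau>. phi2 t f)"
    using sum_const[OF assms(1,3)] sum_const[OF assms(2,3)] by simp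
  also have "\<dots> = (\<Sum>t\<in>\<tau>. \<Sum>f\<in>B. phi2 t f)" by (rule sum.swap)
  finally show ?thesis .
qed

end
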